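(* Let $G$ be a path-pairable graph on $n$ vertices with diameter $d \geq 20$. Then $d \leq 6\sqrt{2}\cdot\sqrt{n}$.
   Context: A graph $G$ on $n=2m$ vertices is path-pairable if for every partition of its vertex set into $m$ pairs $\{x_1,y_1\},\dots,\{x_m,y_m\}$ there exist pairwise edge-disjoint paths $P_1,\dots,P_m$ such that $P_i$ joins $x_i$ to $y_i$ for each $i$. The diameter of $G$ is the maximum distance between two vertices of $G$. *)

theory Defs
  imports Complex_Main "HOL-Library.Extended_Nat"
begin

definition simple_graph :: "'a set \<Rightarrow> 'a set set \<Rightarrow> bool" where
  "simple_graph V E \<longleftrightarrow> finite V \<and> (\<forall>e\<in>E. e \<subseteq> V \<and> card e = 2)"

definition is_walk :: "'a set \<Rightarrow> 'a set set \<Rightarrow> 'a list \<Rightarrow> bool" where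
  "is_walk V E p \<longleftrightarrow> p \<noteq> [] \<and> set p \<subseteq> V \<and>
     (\<forall>i. Suc i < length p \<longrightarrow> {p ! i, p ! Suc i} \<in> E)"

definition is_path :: "'a set \<Rightarrow> 'a set set \<Rightarrow> 'a list \<Rightarrow> bool" where
  "is_path V E p \<longleftrightarrow> is_walk V E p \<and> distinct p"

definition path_edges :: "'a list \<Rightarrow> 'a set set" where
  "path_edges p = {{p ! i, p ! Suc i} | i. Suc i < length p}"

definition is_pairing :: "'a set \<Rightarrow> 'a set set \<Rightarrow> bool" where
  "is_pairing V M \<longleftrightarrow> \<Union>M = V \<and> (\<forall>e\<in>M. card e = 2) \<and>
     (\<forall>e\<in>M. \<forall>e'\<in>M. e \<noteq> e' \<longrightarrow> e \<inter> e' = {})"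

definition path_pairable :: "'a set \<Rightarrow> 'a set set \<Rightarrow> bool" where
  "path_pairable V E \<longleftrightarrow> even (card V) \<and>
     (\<forall>M. is_pairing V M \<longrightarrow>
        (\<exists>P. (\<forall>e\<in>M. is_path V E (P e) \<and> {hd (P e), last (P e)} = e) \<and>
             (\<forall>e\<in>M. \<forall>e'\<in>M. e \<noteq> e' \<longrightarrow> path_edges (P e) \<inter> path_edges (P e') = {})))"

text \<open>Distance (\<infinity> if no walk exists) and diameter.\<close>
definition graph_dist :: "'a set \<Rightarrow> 'a set set \<Rightarrow> 'a \<Rightarrow> 'a \<Rightarrow> enat" where
  "graph_dist V E u v =
     (INF p \<in> {p. is_walk V E p \<and> hd p = u \<and> last p = v}. enat (length p - 1))"

definition diameter :: "'a set \<Rightarrow> 'a set set \<Rightarrow> enat" where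
  "diameter V E = (SUP u \<in> V. SUP v \<in> V. graph_dist V E u v)"

end

theory Submission
  imports Defs
begin

lemma walk_single: "is_walk V E [x] \<longleftrightarrow> x \<in> V"
  by (auto simp: is_walk_def)

lemma walk_Cons2: "is_walk V E (x#y#p) \<longleftrightarrow> x \<in> V \<and> {x,y} \<in> E \<and> is_walk V E (y#p)"
proof
  assume h: "is_walk V E (x#y#p)"
  have e: "\<And>i. Suc i < length (x#y#p) \<Longrightarrow> {(x#y#p) ! i, (x#y#p) ! Suc i} \<in> E"
    using h by (simp add: is_walk_def)
  have "{x,y} \<in> E" using e[of 0] by simp
  moreover have "is_walk V E (y#p)" unfolding is_walk_def
  proof (intro conjI allI impI)
    show "set (y#p) \<subseteq> V" using h by (simp add: is_walk_def)
    fix i assume "Suc i < length (y#p)"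
    then show "{(y#p) ! i, (y#p) ! Suc i} \<in> E" using e[of "Suc i"] by simp
  qed simp
  ultimately show "x \<in> V \<and> {x,y} \<in> E \<and> is_walk V E (y#p)" using h by (simp add: is_walk_def)
next
  assume h: "x \<in> V \<and> {x,y} \<in> E \<and> is_walk V E (y#p)"
  show "is_walk V E (x#y#p)" unfolding is_walk_def
  proof (intro conjI allI impI)
    show "set (x#y#p) \<subseteq> V" using h by (simp add: is_walk_def)
    fix i assume i: "Suc i < length (x#y#p)"
    show "{(x#y#p) ! i, (x#y#p) ! Suc i} \<in> E"
    proof (cases i)
      case 0 then show ?thesis using h by simp
    next
      case (Suc j)
      have hw: "\<forall>j. Suc j < length (y#p) \<longrightarrow> {(y#p) ! j, (y#p) ! Suc j} \<in> E"
        using h unfolding is_walk_def by blast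
      show ?thesis using hw[rule_format, of j] i Suc by simp
    qed
  qed simp
qed

lemma walk_append: "is_walk V E p \<Longrightarrow> is_walk V E q \<Longrightarrow> last p = hd q \<Longrightarrow> is_walk V E (p @ tl q)"
proof (induction p)
  case Nil then show ?case by (simp add: is_walk_def)
next
  case (Cons x p)
  show ?case
  proof (cases "p = []")
    case True
    then have "q \<noteq> []" using Cons.prems by (simp add: is_walk_def)
    then have "q = x # tl q" using Cons.prems True by (cases q) auto
    then show ?thesis using Cons.prems True by simp
  next
    case False
    then obtain y p' where pc: "p = y # p'" by (cases p) auto
    then have w: "x \<in> V" "{x,y} \<in> E" "is_walk V E (y#p')"
      using \<open>is_walk V E (x # p)\<close> by (simp_all add: walk_Cons2)
    have lp: "last p = hd q" using pc \<open>last (x # p) = hd q\<close> by simp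
    have "is_walk V E (p @ tl q)"
      using w pc lp \<open>is_walk V E q\<close> by (intro Cons.IH) simp_all
    then have "is_walk V E ((y#p') @ tl q)" using pc by simp
    then show ?thesis using w pc by (simp add: walk_Cons2)
  qed
qed

lemma walk_nonempty: "is_walk V E p \<Longrightarrow> p \<noteq> []"
  by (simp add: is_walk_def)

lemma walk_rev: "is_walk V E p \<Longrightarrow> is_walk V E (rev p)"
proof (induction p)
  case Nil then show ?case by simp
next
  case (Cons x p)
  show ?case
  proof (cases "p = []")
    case True then show ?thesis using Cons.prems by simp
  next
    case False
    then obtain y p' where pc: "p = y # p'" by (cases p) auto
    then have w: "x \<in> V" "{x,y} \<in> E" "is_walk V E (y#p')"
      using \<open>is_walk V E (x # p)\<close> by (simp_all add: walk_Cons2)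
    have r: "is_walk V E (rev (y#p'))" using pc w Cons.prems Cons.IH by (simp add: walk_Cons2)
    have y: "y \<in> V" using w(3) by (simp add: is_walk_def)
    have "is_walk V E [y,x]" using w y by (simp add: walk_Cons2 walk_single insert_commute)
    then have "is_walk V E (rev (y#p') @ tl [y,x])" using r by (intro walk_append) auto
    then show ?thesis using pc by simp
  qed
qed

lemma dist_le: "is_walk V E p \<Longrightarrow> hd p = u \<Longrightarrow> last p = v \<Longrightarrow> graph_dist V E u v \<le> enat (length p - 1)"
  unfolding graph_dist_def by (rule INF_lower) simp

lemma dist_wit:
  assumes "graph_dist V E u v \<noteq> \<infinity>"
  shows "\<exists>p. is_walk V E p \<and> hd p = u \<and> last p = v \<and> graph_dist V E u v = enat (length p - 1)"
proof -
  let ?S = "{p. is_walk V E p \<and> hd p = u \<and> last p = v}"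
  let ?T = "(\<lambda>p. enat (length p - 1)) ` ?S"
  have d: "graph_dist V E u v = Inf ?T" by (simp add: graph_dist_def)
  have "?T \<noteq> {}"
  proof
    assume "?T = {}"
    then have "Inf ?T = \<infinity>" by (simp add: Inf_enat_def)
    then show False using d assms by simp
  qed
  then have "Inf ?T \<in> ?T" unfolding Inf_enat_def by (auto intro: LeastI)
  then show ?thesis using d by auto
qed

lemma dist_refl: "x \<in> V \<Longrightarrow> graph_dist V E x x = 0"
  using dist_le[of V E "[x]" x x] by (simp add: walk_single zero_enat_def[symmetric])

lemma dist_sym_le: "graph_dist V E u v \<le> graph_dist V E v u"
proof (cases "graph_dist V E v u = \<infinity>")
  case True then show ?thesis unfolding True by simp
next
  case False
  obtain p where p: "is_walk V E p" "hd p = v" "last p = u" "graph_dist V E v u = enat (length p - 1)"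
    using dist_wit[OF False] by blast
  have "p \<noteq> []" using p(1) walk_nonempty by blast
  have "hd (rev p) = u" "last (rev p) = v" using p by (simp_all add: hd_rev last_rev)
  then have "graph_dist V E u v \<le> enat (length (rev p) - 1)"
    using dist_le[OF walk_rev[OF p(1)]] by blast
  then show ?thesis using p(4) by simp
qed

lemma dist_sym: "graph_dist V E u v = graph_dist V E v u"
  by (rule antisym) (rule dist_sym_le)+

lemma dist_tri: "graph_dist V E u v \<le> graph_dist V E u x + graph_dist V E x v"
proof (cases "graph_dist V E u x = \<infinity> \<or> graph_dist V E x v = \<infinity>")
  case True then show ?thesis
  proof
    assume "graph_dist V E u x = \<infinity>" then show ?thesis by simp
  next
    assume "graph_dist V E x v = \<infinity>" then show ?thesis by simp
  qed
next
  case False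
  then have F: "graph_dist V E u x \<noteq> \<infinity>" "graph_dist V E x v \<noteq> \<infinity>" by auto
  obtain p where p: "is_walk V E p" "hd p = u" "last p = x" "graph_dist V E u x = enat (length p - 1)"
    using dist_wit[OF F(1)] by blast
  obtain q where q: "is_walk V E q" "hd q = x" "last q = v" "graph_dist V E x v = enat (length q - 1)"
    using dist_wit[OF F(2)] by blast
  have ne: "p \<noteq> []" "q \<noteq> []" using p q walk_nonempty by blast+
  have w: "is_walk V E (p @ tl q)" using p q by (intro walk_append) auto
  have h: "hd (p @ tl q) = u" using ne p by simp
  have l: "last (p @ tl q) = v"
  proof (cases "tl q = []")
    case True
    then have "last q = hd q" using ne by (cases q) auto
    then show ?thesis using p(3) q(2,3) True by simp
  next
    case False
    then show ?thesis using q ne by (simp add: last_tl)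
  qed
  have "graph_dist V E u v \<le> enat (length (p @ tl q) - 1)" using dist_le[OF w h l] .
  also have "length (p @ tl q) - 1 = (length p - 1) + (length q - 1)" using ne
    by (cases p; cases q) auto
  finally show ?thesis using p q by simp
qed

lemma dist_edge:
  assumes "{x,y} \<in> E" "simple_graph V E"
  shows "graph_dist V E u y \<le> graph_dist V E u x + 1"
proof -
  have xy: "x \<in> V" "y \<in> V" using assms unfolding simple_graph_def by auto
  have "is_walk V E [x,y]" using assms xy by (simp add: walk_Cons2 walk_single)
  then have "graph_dist V E x y \<le> enat 1" using dist_le[of V E "[x,y]" x y] by simp
  then show ?thesis using dist_tri[of V E u y x]
    by (metis add_left_mono one_enat_def order_trans)
qed


lemma crossing:
  "p \<noteq> [] \<Longrightarrow> Q (hd p) \<Longrightarrow> \<not> Q (last p) \<Longrightarrow> \<exists>i. Suc i < length p \<and> Q (p ! i) \<and> \<not> Q (p ! Suc i)"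
proof (induction p)
  case Nil then show ?case by simp
next
  case (Cons x p)
  show ?case
  proof (cases "p = []")
    case True then show ?thesis using Cons.prems by simp
  next
    case False
    show ?thesis
    proof (cases "Q (hd p)")
      case True
      have "last (x # p) = last p" using False by simp
      then obtain i where "Suc i < length p" "Q (p ! i)" "\<not> Q (p ! Suc i)"
        using Cons.IH[OF False True] Cons.prems by auto
      then show ?thesis by (intro exI[of _ "Suc i"]) simp
    next
      case nq: False
      have "Q ((x#p) ! 0)" "\<not> Q ((x#p) ! Suc 0)" using Cons.prems nq False
        by (simp_all add: hd_conv_nth)
      moreover have "Suc 0 < length (x#p)" using False by simp
      ultimately show ?thesis by blast
    qed
  qed
qed

lemma pairing_exists: "finite R \<Longrightarrow> even (card R) \<Longrightarrow> \<exists>M. is_pairing R M"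
proof (induction "card R" arbitrary: R rule: less_induct)
  case less
  show ?case
  proof (cases "R = {}")
    case True then show ?thesis by (intro exI[of _ "{}"]) (simp add: is_pairing_def)
  next
    case False
    then obtain x where x: "x \<in> R" by blast
    have "card R \<noteq> 1" using less.prems by auto
    moreover have "card R > 0" using False less.prems by (simp add: card_gt_0_iff)
    ultimately have "card (R - {x}) > 0" using x less.prems by simp
    then obtain y where y: "y \<in> R - {x}" by (metis card_gt_0_iff ex_in_conv)
    define R' where "R' = R - {x,y}"
    have "card {x,y} = 2" using y by auto
    then have cR': "card R' = card R - 2" using x y less.prems unfolding R'_def
      by (simp add: card_Diff_subset)
    have "card R' < card R" using cR' \<open>card R > 0\<close> by simp
    moreover have "finite R'" using less.prems R'_def by simp
    moreover have "even (card R')" using cR' less.prems \<open>card (R - {x}) > 0\<close> x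
      by simp
    ultimately obtain M' where M': "is_pairing R' M'" using less.hyps by blast
    have sub: "\<And>e. e \<in> M' \<Longrightarrow> e \<subseteq> R'" using M' unfolding is_pairing_def by blast
    have "is_pairing R (insert {x,y} M')"
      unfolding is_pairing_def
    proof (intro conjI ballI impI)
      show "\<Union> (insert {x, y} M') = R" using M' x y unfolding is_pairing_def R'_def by auto
      fix e assume "e \<in> insert {x,y} M'"
      then show "card e = 2" using M' y unfolding is_pairing_def by auto
    next
      fix e e' assume e: "e \<in> insert {x,y} M'" and e': "e' \<in> insert {x,y} M'" and ne: "e \<noteq> e'"
      show "e \<inter> e' = {}"
      proof (cases "e = {x,y}")
        case True
        then have "e' \<in> M'" using e' ne by auto
        then show ?thesis using sub True unfolding R'_def by blast
      next
        case f1: False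
        then have "e \<in> M'" using e by auto
        show ?thesis
        proof (cases "e' = {x,y}")
          case True then show ?thesis using sub \<open>e \<in> M'\<close> unfolding R'_def by blast
        next
          case False then have "e' \<in> M'" using e' by auto
          then show ?thesis using M' \<open>e \<in> M'\<close> ne unfolding is_pairing_def by blast
        qed
      qed
    qed
    then show ?thesis by blast
  qed
qed

definition cut_edges :: "'a set set \<Rightarrow> 'a set \<Rightarrow> 'a set set" where
  "cut_edges E A = {e\<in>E. \<exists>x y. e = {x,y} \<and> x \<in> A \<and> y \<notin> A}"

lemma walk_cut:
  assumes "is_walk V E p" "hd p \<in> A" "last p \<notin> A"
  shows "\<exists>e\<in>path_edges p. e \<in> cut_edges E A"
proof -
  obtain i where i: "Suc i < length p" "p ! i \<in> A" "p ! Suc i \<notin> A"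
    using crossing[of p "\<lambda>z. z \<in> A"] assms walk_nonempty by blast
  have "{p ! i, p ! Suc i} \<in> E" using assms(1) i(1) unfolding is_walk_def by blast
  moreover have "{p ! i, p ! Suc i} \<in> path_edges p" using i(1) unfolding path_edges_def by blast
  ultimately show ?thesis using i unfolding cut_edges_def by blast
qed

lemma walk_cut':
  assumes "is_walk V E p" "hd p \<notin> A" "last p \<in> A"
  shows "\<exists>e\<in>path_edges p. e \<in> cut_edges E A"
proof -
  obtain i where i: "Suc i < length p" "p ! i \<notin> A" "p ! Suc i \<in> A"
    using crossing[of p "\<lambda>z. z \<notin> A"] assms walk_nonempty by blast
  have "{p ! i, p ! Suc i} \<in> E" using assms(1) i(1) unfolding is_walk_def by blast
  moreover have "{p ! i, p ! Suc i} \<in> path_edges p" using i(1) unfolding path_edges_def by blast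
  moreover have "{p ! i, p ! Suc i} = {p ! Suc i, p ! i}" by blast
  ultimately show ?thesis using i unfolding cut_edges_def by blast
qed


lemma cut_lemma:
  assumes sg: "simple_graph V E" and pp: "path_pairable V E"
    and A: "A \<subseteq> V" and cA: "2 * card A \<le> card V"
  shows "card A \<le> card (cut_edges E A)"
proof -
  have fV: "finite V" using sg by (simp add: simple_graph_def)
  have fA: "finite A" using fV A finite_subset by blast
  have cVA: "card (V - A) = card V - card A" using A fA by (simp add: card_Diff_subset)
  have "card A \<le> card (V - A)" using cVA cA by simp
  then obtain f where f: "f ` A \<subseteq> V - A" "inj_on f A"
    using card_le_inj[of A "V - A"] fA fV by blast
  define B where "B = f ` A"
  have cB: "card B = card A" using f(2) by (simp add: B_def card_image)
  define R where "R = V - A - B"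
  have cR: "card R = card V - 2 * card A"
    using cVA cB f(1) fV unfolding R_def B_def by (simp add: card_Diff_subset finite_subset)
  have evV: "even (card V)" using pp by (simp add: path_pairable_def)
  have "even (card R)" using cR evV cA by simp
  moreover have "finite R" using fV R_def by simp
  ultimately obtain MR where MR: "is_pairing R MR" using pairing_exists by blast
  have subR: "\<And>e. e \<in> MR \<Longrightarrow> e \<subseteq> R" using MR unfolding is_pairing_def by blast
  define MA where "MA = (\<lambda>x. {x, f x}) ` A"
  have fx: "\<And>x. x \<in> A \<Longrightarrow> f x \<in> V \<and> f x \<notin> A" using f(1) by blast
  have pairing: "is_pairing V (MA \<union> MR)"
    unfolding is_pairing_def
  proof (intro conjI ballI impI)
    have "\<Union> MA = A \<union> B" unfolding MA_def B_def by auto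
    moreover have "\<Union> MR = R" using MR by (simp add: is_pairing_def)
    ultimately show "\<Union> (MA \<union> MR) = V" using A f(1) unfolding R_def B_def by auto
  next
    fix e assume "e \<in> MA \<union> MR"
    then show "card e = 2"
    proof
      assume "e \<in> MA"
      then obtain x where "x \<in> A" "e = {x, f x}" unfolding MA_def by blast
      then show ?thesis using fx[of x] by (cases "x = f x") auto
    next
      assume "e \<in> MR" then show ?thesis using MR by (simp add: is_pairing_def)
    qed
  next
    fix e e' assume e: "e \<in> MA \<union> MR" and e': "e' \<in> MA \<union> MR" and ne: "e \<noteq> e'"
    have subA: "\<And>e. e \<in> MA \<Longrightarrow> e \<subseteq> A \<union> B" unfolding MA_def B_def by auto
    have disj: "(A \<union> B) \<inter> R = {}" unfolding R_def by auto
    show "e \<inter> e' = {}"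
    proof (cases "e \<in> MA")
      case True
      then obtain x where x: "x \<in> A" "e = {x, f x}" unfolding MA_def by blast
      show ?thesis
      proof (cases "e' \<in> MA")
        case True
        then obtain x' where x': "x' \<in> A" "e' = {x', f x'}" unfolding MA_def by blast
        then have "x \<noteq> x'" using x ne by auto
        then have "f x \<noteq> f x'" using f(2) x x' by (meson inj_onD)
        then show ?thesis using x x' fx[of x] fx[of x'] \<open>x \<noteq> x'\<close> by auto
      next
        case False
        then have "e' \<in> MR" using e' by blast
        then show ?thesis using subR subA True disj by blast
      qed
    next
      case False
      then have "e \<in> MR" using e by blast
      show ?thesis
      proof (cases "e' \<in> MA")
        case True
        then show ?thesis using subR subA \<open>e \<in> MR\<close> disj by blast
      next
        case False
        then have "e' \<in> MR" using e' by blast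
        then show ?thesis using MR \<open>e \<in> MR\<close> ne unfolding is_pairing_def by blast
      qed
    qed
  qed
  have "\<exists>P. (\<forall>e\<in>MA \<union> MR. is_path V E (P e) \<and> {hd (P e), last (P e)} = e) \<and>
    (\<forall>e\<in>MA \<union> MR. \<forall>e'\<in>MA \<union> MR. e \<noteq> e' \<longrightarrow> path_edges (P e) \<inter> path_edges (P e') = {})"
    using conjunct2[OF pp[unfolded path_pairable_def], rule_format, OF pairing] .
  then obtain P where P: "\<forall>e\<in>MA \<union> MR. is_path V E (P e) \<and> {hd (P e), last (P e)} = e"
    "\<forall>e\<in>MA \<union> MR. \<forall>e'\<in>MA \<union> MR. e \<noteq> e' \<longrightarrow> path_edges (P e) \<inter> path_edges (P e') = {}"
    by (elim exE conjE)
  have "\<forall>x\<in>A. \<exists>c. c \<in> path_edges (P {x, f x}) \<and> c \<in> cut_edges E A"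
  proof
    fix x assume x: "x \<in> A"
    let ?p = "P {x, f x}"
    have "{x, f x} \<in> MA \<union> MR" unfolding MA_def using x by (intro UnI1 imageI)
    then have w: "is_walk V E ?p" and he: "{hd ?p, last ?p} = {x, f x}"
      using P(1) by (auto simp: is_path_def)
    have "(hd ?p = x \<and> last ?p = f x) \<or> (hd ?p = f x \<and> last ?p = x)"
      using he[unfolded doubleton_eq_iff] by (elim disjE) auto
    then show "\<exists>c. c \<in> path_edges ?p \<and> c \<in> cut_edges E A"
    proof
      assume "hd ?p = x \<and> last ?p = f x"
      then have "\<exists>e\<in>path_edges ?p. e \<in> cut_edges E A" using walk_cut[OF w] x fx[OF x] by simp
      then show ?thesis by blast
    next
      assume "hd ?p = f x \<and> last ?p = x"
      then have "\<exists>e\<in>path_edges ?p. e \<in> cut_edges E A" using walk_cut'[OF w] x fx[OF x] by simp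
      then show ?thesis by blast
    qed
  qed
  then have "\<exists>g. \<forall>x\<in>A. g x \<in> path_edges (P {x, f x}) \<and> g x \<in> cut_edges E A"
    by (rule bchoice)
  then obtain g where g: "\<forall>x\<in>A. g x \<in> path_edges (P {x, f x}) \<and> g x \<in> cut_edges E A"
    by (elim exE)
  have "inj_on g A"
  proof (rule inj_onI)
    fix x x' assume x: "x \<in> A" and x': "x' \<in> A" and gx: "g x = g x'"
    show "x = x'"
    proof (rule ccontr)
      assume ne: "x \<noteq> x'"
      have "x \<notin> {x', f x'}" using ne fx[OF x'] x by auto
      then have "{x, f x} \<noteq> {x', f x'}" by auto
      moreover have m1: "{x, f x} \<in> MA \<union> MR" unfolding MA_def using x by (intro UnI1 imageI)
      moreover have m2: "{x', f x'} \<in> MA \<union> MR" unfolding MA_def using x' by (intro UnI1 imageI)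
      ultimately have D: "path_edges (P {x, f x}) \<inter> path_edges (P {x', f x'}) = {}"
        using P(2)[rule_format, OF m1 m2] by blast
      have g1: "g x \<in> path_edges (P {x, f x})" using g x by blast
      have g2: "g x \<in> path_edges (P {x', f x'})" using g x' gx by metis
      show False using D g1 g2 by (metis IntI empty_iff)
    qed
  qed
  moreover have "g ` A \<subseteq> cut_edges E A" using g by blast
  moreover have "finite (cut_edges E A)"
  proof -
    have "E \<subseteq> Pow V" using sg unfolding simple_graph_def by blast
    then have "finite E" using fV finite_subset by blast
    then show ?thesis unfolding cut_edges_def by simp
  qed
  ultimately show ?thesis by (rule card_inj_on_le)
qed


lemma sq_le_sum: "4 * (a * b) \<le> ((a::nat) + b)^2"
proof -
  have "0 \<le> (int a - int b)^2" by simp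
  then have "4 * (int a * int b) \<le> (int a + int b)^2" by (simp add: power2_eq_square algebra_simps)
  then have "int (4 * (a * b)) \<le> int ((a + b)^2)" by simp
  then show ?thesis by (simp only: of_nat_le_iff)
qed

lemma growth:
  fixes a :: "nat \<Rightarrow> nat"
  assumes a0: "1 \<le> a 0" and h: "\<And>i. i \<le> r \<Longrightarrow> sum a {..i} \<le> a i * a (Suc i)"
  shows "n \<le> r \<Longrightarrow> (n+1)^2 \<le> 4 * sum a {..n}"
proof (induction n rule: nat_less_induct)
  case (1 n)
  show ?case
  proof (cases n)
    case 0 then show ?thesis using a0 by simp
  next
    case (Suc m)
    show ?thesis
    proof (cases m)
      case 0
      have "a 0 \<le> a 0 * a 1" using h[of 0] by simp
      then have "a 1 \<ge> 1" using a0 by (cases "a 1") auto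
      then show ?thesis using Suc 0 a0 by (simp add: numeral_eq_Suc)
    next
      case (Suc j)
      have n: "n = Suc (Suc j)" using \<open>n = Suc m\<close> Suc by simp
      have ih1: "(Suc j + 1)^2 \<le> 4 * sum a {..Suc j}" using "1.IH" n "1.prems" by auto
      have ih0: "(j+1)^2 \<le> 4 * sum a {..j}" using "1.IH" n "1.prems" by auto
      have hs: "sum a {..Suc j} \<le> a (Suc j) * a (Suc (Suc j))" using h[of "Suc j"] "1.prems" n by simp
      have "(Suc j + 1)^2 \<le> (a (Suc j) + a (Suc (Suc j)))^2"
        using ih1 hs sq_le_sum[of "a (Suc j)" "a (Suc (Suc j))"] by linarith
      then have s: "Suc j + 1 \<le> a (Suc j) + a (Suc (Suc j))"
        using power2_le_imp_le by blast
      have sm: "sum a {..n} = sum a {..j} + a (Suc j) + a (Suc (Suc j))" using n by simp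
      have sq: "(n+1)^2 = (j+1)^2 + 4*(j+2)" using n by (simp add: power2_eq_square)
      have s2: "j + 2 \<le> a (Suc j) + a (Suc (Suc j))" using s by simp
      have "(j+1)^2 + 4 * (j + 2) \<le> 4 * sum a {..j} + 4 * (a (Suc j) + a (Suc (Suc j)))"
        by (rule add_mono[OF ih0 mult_le_mono2[OF s2]])
      then show ?thesis unfolding sq sm by (simp add: algebra_simps)
    qed
  qed
qed

lemma enat_le_Suc: "(x::enat) \<le> enat (Suc i) \<longleftrightarrow> x \<le> enat i \<or> x = enat (Suc i)"
  by (cases x) auto

lemma enat_le_0: "(x::enat) \<le> enat 0 \<longleftrightarrow> x = enat 0"
  by (cases x) auto

lemma enat_cut: "(dx::enat) \<le> enat i \<Longrightarrow> \<not> dy \<le> enat i \<Longrightarrow> dy \<le> dx + 1 \<Longrightarrow> dx = enat i \<and> dy = enat (Suc i)"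
  by (cases dx; cases dy) (auto simp: one_enat_def)

lemma ball_bound:
  assumes sg: "simple_graph V E" and pp: "path_pairable V E" and w: "w \<in> V"
    and r: "2 * card {x\<in>V. graph_dist V E w x \<le> enat r} \<le> card V"
  shows "(r+1)^2 \<le> 4 * card {x\<in>V. graph_dist V E w x \<le> enat r}"
proof -
  define L where "L i = {x\<in>V. graph_dist V E w x = enat i}" for i
  define Bl where "Bl i = {x\<in>V. graph_dist V E w x \<le> enat i}" for i
  define a where "a i = card (L i)" for i
  have fV: "finite V" using sg by (simp add: simple_graph_def)
  have fL: "finite (L i)" for i unfolding L_def using fV by simp
  have fB: "finite (Bl i)" for i unfolding Bl_def using fV by simp
  have cardB: "card (Bl i) = sum a {..i}" for i
  proof (induction i)
    case 0
    have "Bl 0 = L 0" unfolding Bl_def L_def by (simp add: enat_le_0)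
    then show ?case by (simp add: a_def)
  next
    case (Suc i)
    have "Bl (Suc i) = Bl i \<union> L (Suc i)" unfolding Bl_def L_def by (auto simp: enat_le_Suc)
    moreover have "Bl i \<inter> L (Suc i) = {}" unfolding Bl_def L_def by auto
    ultimately have "card (Bl (Suc i)) = card (Bl i) + card (L (Suc i))"
      using fB fL by (simp add: card_Un_disjoint)
    then show ?case using Suc by (simp add: a_def)
  qed
  have hcut: "sum a {..i} \<le> a i * a (Suc i)" if i: "i \<le> r" for i
  proof -
    have "Bl i \<subseteq> Bl r" unfolding Bl_def using i by (auto intro: order_trans)
    then have "card (Bl i) \<le> card (Bl r)" using fB by (simp add: card_mono)
    then have "2 * card (Bl i) \<le> card V" using r unfolding Bl_def by simp
    moreover have "Bl i \<subseteq> V" unfolding Bl_def by blast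
    ultimately have c1: "card (Bl i) \<le> card (cut_edges E (Bl i))" using cut_lemma[OF sg pp] by blast
    have sub: "cut_edges E (Bl i) \<subseteq> (\<lambda>(x,y). {x,y}) ` (L i \<times> L (Suc i))"
    proof
      fix e assume "e \<in> cut_edges E (Bl i)"
      then obtain x y where e: "e \<in> E" "e = {x,y}" "x \<in> Bl i" "y \<notin> Bl i"
        unfolding cut_edges_def by blast
      have yV: "y \<in> V" using e sg unfolding simple_graph_def by blast
      have xV: "x \<in> V" using e(3) unfolding Bl_def by blast
      have "graph_dist V E w y \<le> graph_dist V E w x + 1" using dist_edge e sg by metis
      moreover have "graph_dist V E w x \<le> enat i" using e(3) unfolding Bl_def by blast
      moreover have "\<not> graph_dist V E w y \<le> enat i" using e(4) yV unfolding Bl_def by blast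
      ultimately have "graph_dist V E w x = enat i \<and> graph_dist V E w y = enat (Suc i)"
        by (rule enat_cut[rotated 2])
      then have "(x,y) \<in> L i \<times> L (Suc i)" using xV yV unfolding L_def by blast
      then show "e \<in> (\<lambda>(x,y). {x,y}) ` (L i \<times> L (Suc i))" using e(2) by force
    qed
    have "card (cut_edges E (Bl i)) \<le> card ((\<lambda>(x,y). {x,y}) ` (L i \<times> L (Suc i)))"
      using sub fL by (intro card_mono) auto
    also have "\<dots> \<le> card (L i \<times> L (Suc i))" by (rule card_image_le) (simp add: fL)
    also have "\<dots> = a i * a (Suc i)" by (simp add: a_def card_cartesian_product)
    finally show ?thesis using c1 cardB by simp
  qed
  have "w \<in> L 0" unfolding L_def using w dist_refl[OF w] by (simp add: zero_enat_def)
  then have a0: "1 \<le> a 0" unfolding a_def using fL card_0_eq by (metis One_nat_def Suc_leI empty_iff neq0_conv)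
  have "(r+1)^2 \<le> 4 * sum a {..r}" using growth[of a r r, OF a0 hcut] by simp
  then show ?thesis using cardB[of r] unfolding Bl_def by simp
qed


theorem theorem1:
  fixes V :: "'a set" and E :: "'a set set" and d :: nat
  assumes "simple_graph V E"
    and "path_pairable V E"
    and "diameter V E = enat d"
    and "d \<ge> 20"
  shows "real d \<le> 6 * sqrt 2 * sqrt (real (card V))"
proof -
  note sg = assms(1) and pp = assms(2)
  have fV: "finite V" using sg by (simp add: simple_graph_def)
  have Vne: "V \<noteq> {}"
  proof
    assume "V = {}"
    then have "diameter V E = 0" by (simp add: diameter_def bot_enat_def)
    then show False using assms(3,4) by (simp add: zero_enat_def)
  qed
  define D where "D u = (SUP v\<in>V. graph_dist V E u v)" for u
  have "diameter V E = Sup (D ` V)" by (simp add: diameter_def D_def)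
  also have "\<dots> = Max (D ` V)" using fV Vne by (intro cSup_eq_Max) auto
  finally have dm: "diameter V E = Max (D ` V)" .
  have "Max (D ` V) \<in> D ` V" using fV Vne by (intro Max_in) auto
  then obtain u where u: "u \<in> V" "D u = enat d"
    using dm assms(3) by auto
  have "D u = Max ((\<lambda>v. graph_dist V E u v) ` V)" unfolding D_def using fV Vne
    by (intro cSup_eq_Max) auto
  moreover have "Max ((\<lambda>v. graph_dist V E u v) ` V) \<in> (\<lambda>v. graph_dist V E u v) ` V"
    using fV Vne by (intro Max_in) auto
  ultimately obtain v where v: "v \<in> V" "graph_dist V E u v = enat d" using u(2) by auto
  define r where "r = (d - 1) div 2"
  have r2: "2 * r < d" using assms(4) unfolding r_def by simp
  define Bu where "Bu = {x\<in>V. graph_dist V E u x \<le> enat r}"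
  define Bv where "Bv = {x\<in>V. graph_dist V E v x \<le> enat r}"
  have disj: "Bu \<inter> Bv = {}"
  proof (rule ccontr)
    assume "Bu \<inter> Bv \<noteq> {}"
    then obtain x where x: "graph_dist V E u x \<le> enat r" "graph_dist V E v x \<le> enat r"
      unfolding Bu_def Bv_def by blast
    have "graph_dist V E u v \<le> graph_dist V E u x + graph_dist V E x v" by (rule dist_tri)
    also have "\<dots> = graph_dist V E u x + graph_dist V E v x" using dist_sym by metis
    also have "\<dots> \<le> enat r + enat r" using x by (rule add_mono)
    finally have "enat d \<le> enat (2 * r)" using v(2) by simp
    then show False using r2 by simp
  qed
  have "card Bu + card Bv = card (Bu \<union> Bv)" using disj fV unfolding Bu_def Bv_def
    by (intro card_Un_disjoint[symmetric]) auto
  also have "\<dots> \<le> card V" using fV unfolding Bu_def Bv_def by (intro card_mono) auto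
  finally have cs: "card Bu + card Bv \<le> card V" .
  have key: "(r+1)^2 \<le> 2 * card V"
  proof (cases "2 * card Bu \<le> card V")
    case True
    then have "(r+1)^2 \<le> 4 * card Bu" using ball_bound[OF sg pp u(1)] unfolding Bu_def by blast
    then show ?thesis using True by linarith
  next
    case False
    then have "2 * card Bv \<le> card V" using cs by linarith
    then have "(r+1)^2 \<le> 4 * card Bv" using ball_bound[OF sg pp v(1)] unfolding Bv_def by blast
    then show ?thesis using \<open>2 * card Bv \<le> card V\<close> by linarith
  qed
  have "d \<le> 2 * (r + 1)" unfolding r_def by simp
  then have "d^2 \<le> (2 * (r+1))^2" by (rule power_mono) simp
  also have "\<dots> = 4 * (r+1)^2" by (simp only: power_mult_distrib) simp
  also have "\<dots> \<le> 72 * card V" using key by simp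
  finally have "real d ^ 2 \<le> 72 * real (card V)" by (metis of_nat_le_iff of_nat_mult of_nat_numeral of_nat_power)
  then have "real d \<le> sqrt (72 * real (card V))" by (rule real_le_rsqrt)
  also have "sqrt (72 * real (card V)) = 6 * sqrt 2 * sqrt (real (card V))"
  proof -
    have "sqrt 72 = 6 * sqrt 2"
    proof -
      have "sqrt 72 = sqrt (6^2 * 2)" by simp
      also have "\<dots> = sqrt (6^2) * sqrt 2" by (rule real_sqrt_mult)
      also have "\<dots> = 6 * sqrt 2" by simp
      finally show ?thesis .
    qed
    then show ?thesis by (simp add: real_sqrt_mult)
  qed
  finally show ?thesis .
qed

end
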